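(* Let $X(1),\dots,X(n)$ be UVs with values in $\mathscr{X}$ and $Y(1),\dots,Y(n)$ UVs with values in $\mathscr{Y}$ on a common sample space, and let $X(1:n)=(X(1),\dots,X(n))$, $Y(1:n)=(Y(1),\dots,Y(n))$. Assume $[\![X(1:n)]\!]=[\![X(1)]\!]\times\cdots\times[\![X(n)]\!]$ and, for every $x(1:n)\in[\![X(1:n)]\!]$, $[\![Y(1:n)|x(1:n)]\!]=[\![Y(1)|x(1)]\!]\times\cdots\times[\![Y(n)|x(n)]\!]$. Let $$0\le\delta<\min_{1\le i\le n,\ x(i)\in[\![X(i)]\!]}m_{\mathscr{Y}}([\![Y(i)|x(i)]\!]),$$ and assume either $(X(1:n),Y(1:n))\stackrel{d}{\leftrightarrow}(0,\delta^n)$ or $(X(1:n),Y(1:n))\stackrel{a}{\leftrightarrow}(1,\delta^n)$. For each $i$ let $[\![Y(i)|X(i)]\!]^*_\delta$ be a $\delta$-overlap family of $[\![Y(i)]\!]$, and let $\prod_{i=1}^n[\![Y(i)|X(i)]\!]^*_\delta=\{S_1\times\cdots\times S_n: S_i\in[\![Y(i)|X(i)]\!]^*_\delta\}$. Under the product uncertainty assumption, the following hold: (1) $\prod_{i=1}^n[\![Y(i)|X(i)]\!]^*_\delta$ is a covering of $[\![Y(1:n)]\!]$; (2) every $S\in\prod_{i=1}^n[\![Y(i)|X(i)]\!]^*_\delta$ is $\delta^n$-connected via $[\![Y(1:n)|X(1:n)]\!]$ and contains at least one conditional range $[\![Y(1:n)|x(1:n)]\!]$; (3) for every $x(1:n)\in[\![X(1:n)]\!]$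 there is $S\in\prod_{i=1}^n[\![Y(i)|X(i)]\!]^*_\delta$ with $[\![Y(1:n)|x(1:n)]\!]\subseteq S$; (4) for all $S_1,S_2\in\prod_{i=1}^n[\![Y(i)|X(i)]\!]^*_\delta$ (distinct), $m_{\mathscr{Y}}(S_1\cap S_2)/m_{\mathscr{Y}}([\![Y(1:n)]\!])\le\delta(\hat\delta(n))^{n-1}$, where $\hat\delta(n)=\max_{1\le i\le n,\ S\in[\![Y(i)|X(i)]\!]^*_\delta} m_{\mathscr{Y}}(S)/m_{\mathscr{Y}}([\![Y(i)]\!])$.
   Context: A UV is a map $U$ from a sample space $\Omega$ to a set; $[\![U]\!]=\{U(\omega)\}$; $[\![U|w]\!]=\{U(\omega):W(\omega)=w\}$, $[\![U|W]\!]=\{[\![U|w]\!]:w\in[\![W]\!]\}$; $X(1:n)(\omega)=(X(1)(\omega),\dots,X(n)(\omega))$. An uncertainty function on a set $\mathscr{U}$ is a map $m$ on subsets of $\mathscr{U}$ with $m(\emptyset)=0$, $0<m(S)<\infty$ for nonempty $S$, $\max\{m(S_1),m(S_2)\}\le m(S_1\cup S_2)$. Here $m_{\mathscr{X}}$ (resp. $m_{\mathscr{Y}}$) is defined on subsets of $\mathscr{X}^k$ (resp. $\mathscr{Y}^k$) for every $k\ge1$, is an uncertainty function on each, and $m_{\mathscr{Y}}(\mathscr{Y}^k)=1$ for all $k$. Product uncertainty assumption: for every $k$ and all $S_1,\dots,S_k\subseteq\mathscr{Y}$, $m_{\mathscr{Y}}(S_1\times\cdots\times S_k)=\prod_i m_{\mathscr{Y}}(S_i)$.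 Association: $\mathscr{A}(X;Y)=\{m_{\mathscr{X}}([\![X|y_1]\!]\cap[\![X|y_2]\!])/m_{\mathscr{X}}([\![X]\!]):y_1\ne y_2\in[\![Y]\!]\}\setminus\{0\}$, $\mathscr{A}(Y;X)=\{m_{\mathscr{Y}}([\![Y|x_1]\!]\cap[\![Y|x_2]\!])/m_{\mathscr{Y}}([\![Y]\!]):x_1\ne x_2\in[\![X]\!]\}\setminus\{0\}$. $\mathscr{A}\succ\delta$: all elements $>\delta$ (false for $\emptyset$); $\mathscr{A}\preceq\delta$: all elements $\le\delta$ (true for $\emptyset$). $(X,Y)\stackrel{d}{\leftrightarrow}(\delta_1,\delta_2)$ iff $\mathscr{A}(X;Y)\succ\delta_1,\mathscr{A}(Y;X)\succ\delta_2$; $(X,Y)\stackrel{a}{\leftrightarrow}(\delta_1,\delta_2)$ iff $\mathscr{A}(X;Y)\preceq\delta_1,\mathscr{A}(Y;X)\preceq\delta_2$. $\delta$-connectedness and overlap families: for UVs $U$ (with uncertainty function $m_{\mathscr{U}}$) and $W$, $u,u'\in[\![U]\!]$ are $\delta$-connected via $[\![U|W]\!]$ if there are $w_1,\dots,w_N\in[\![W]\!]$ with $u\in[\![U|w_1]\!]$, $u'\in[\![U|w_N]\!]$, $m_{\mathscr{U}}([\![U|w_i]\!]\cap[\![U|w_{i-1}]\!])/m_{\mathscr{U}}([\![U]\!])>\delta$ for $1<i\le N$; a set is $\delta$-connected if all pairs of its points are. A $\delta$-overlap family $[\![U|W]\!]^*_\delta$ is a family of distinct subsets covering $[\![U]\!]$,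 of largest cardinality among covering families with (i) each member $\delta$-connected and containing some $[\![U|w]\!]$; (ii) distinct members $S_1,S_2$ satisfy $m_{\mathscr{U}}(S_1\cap S_2)\le\delta\,m_{\mathscr{U}}([\![U]\!])$; (iii) each $[\![U|w]\!]$ contained in some member. *)

theory Defs
  imports Complex_Main
begin

text \<open>Uncertain variables (UVs) are maps from the sample space (a type) to a value set.\<close>

definition rng :: "('w \<Rightarrow> 'u) \<Rightarrow> 'u set" where
  "rng U = U ` UNIV"

definition cond_range :: "('w \<Rightarrow> 'u) \<Rightarrow> ('w \<Rightarrow> 'v) \<Rightarrow> 'v \<Rightarrow> 'u set" where
  "cond_range U W w = {U \<omega> | \<omega>. W \<omega> = w}"

definition cond_ranges :: "('w \<Rightarrow> 'u) \<Rightarrow> ('w \<Rightarrow> 'v) \<Rightarrow> 'u set set" where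
  "cond_ranges U W = cond_range U W ` rng W"

definition unc_fun :: "'u set \<Rightarrow> ('u set \<Rightarrow> real) \<Rightarrow> bool" where
  "unc_fun U m \<longleftrightarrow> m {} = 0 \<and> (\<forall>S. S \<subseteq> U \<longrightarrow> S \<noteq> {} \<longrightarrow> 0 < m S) \<and>
     (\<forall>S1 S2. S1 \<subseteq> U \<longrightarrow> S2 \<subseteq> U \<longrightarrow> max (m S1) (m S2) \<le> m (S1 \<union> S2))"

text \<open>Tuples in U^k are represented as lists of length k; the product S_1 x ... x S_k.\<close>
definition prod_set :: "nat \<Rightarrow> (nat \<Rightarrow> 'u set) \<Rightarrow> 'u list set" where
  "prod_set k S = {xs. length xs = k \<and> (\<forall>i<k. xs ! i \<in> S i)}"

text \<open>The tuple UV U(1:n), with indices 0..n-1.\<close>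
definition tuple_uv :: "nat \<Rightarrow> (nat \<Rightarrow> 'w \<Rightarrow> 'u) \<Rightarrow> 'w \<Rightarrow> 'u list" where
  "tuple_uv n U \<omega> = map (\<lambda>i. U i \<omega>) [0..<n]"

text \<open>Uncertainty of a subset of U = U^1 (as a set of one-element lists).\<close>
definition m1 :: "('u list set \<Rightarrow> real) \<Rightarrow> 'u set \<Rightarrow> real" where
  "m1 m S = m ((\<lambda>y. [y]) ` S)"

definition assoc :: "('u set \<Rightarrow> real) \<Rightarrow> ('w \<Rightarrow> 'u) \<Rightarrow> ('w \<Rightarrow> 'v) \<Rightarrow> real set" where
  "assoc mU U W =
     {mU (cond_range U W w1 \<inter> cond_range U W w2) / mU (rng U) | w1 w2.
        w1 \<in> rng W \<and> w2 \<in> rng W \<and> w1 \<noteq> w2} - {0}"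

definition succ_rel :: "real set \<Rightarrow> real \<Rightarrow> bool" where
  "succ_rel A d \<longleftrightarrow> A \<noteq> {} \<and> (\<forall>a\<in>A. a > d)"

definition preceq_rel :: "real set \<Rightarrow> real \<Rightarrow> bool" where
  "preceq_rel A d \<longleftrightarrow> (\<forall>a\<in>A. a \<le> d)"

definition disassoc :: "('x set \<Rightarrow> real) \<Rightarrow> ('y set \<Rightarrow> real) \<Rightarrow> ('w \<Rightarrow> 'x) \<Rightarrow> ('w \<Rightarrow> 'y)
    \<Rightarrow> real \<Rightarrow> real \<Rightarrow> bool" where
  "disassoc mX mY X Y d1 d2 \<longleftrightarrow> succ_rel (assoc mX X Y) d1 \<and> succ_rel (assoc mY Y X) d2"

definition assoc_rel :: "('x set \<Rightarrow> real) \<Rightarrow> ('y set \<Rightarrow> real) \<Rightarrow> ('w \<Rightarrow> 'x) \<Rightarrow> ('w \<Rightarrow> 'y)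
    \<Rightarrow> real \<Rightarrow> real \<Rightarrow> bool" where
  "assoc_rel mX mY X Y d1 d2 \<longleftrightarrow> preceq_rel (assoc mX X Y) d1 \<and> preceq_rel (assoc mY Y X) d2"

definition delta_connected :: "('u set \<Rightarrow> real) \<Rightarrow> ('w \<Rightarrow> 'u) \<Rightarrow> ('w \<Rightarrow> 'v) \<Rightarrow> real
    \<Rightarrow> 'u \<Rightarrow> 'u \<Rightarrow> bool" where
  "delta_connected mU U W d u u' \<longleftrightarrow>
     (\<exists>ws. ws \<noteq> [] \<and> set ws \<subseteq> rng W \<and>
        u \<in> cond_range U W (hd ws) \<and> u' \<in> cond_range U W (last ws) \<and>
        (\<forall>i. 0 < i \<and> i < length ws \<longrightarrow>
           mU (cond_range U W (ws ! i) \<inter> cond_range U W (ws ! (i - 1))) / mU (rng U) > d))"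

definition delta_connected_set :: "('u set \<Rightarrow> real) \<Rightarrow> ('w \<Rightarrow> 'u) \<Rightarrow> ('w \<Rightarrow> 'v) \<Rightarrow> real
    \<Rightarrow> 'u set \<Rightarrow> bool" where
  "delta_connected_set mU U W d S \<longleftrightarrow> (\<forall>u\<in>S. \<forall>u'\<in>S. delta_connected mU U W d u u')"

definition admissible_family :: "('u set \<Rightarrow> real) \<Rightarrow> ('w \<Rightarrow> 'u) \<Rightarrow> ('w \<Rightarrow> 'v) \<Rightarrow> real
    \<Rightarrow> 'u set set \<Rightarrow> bool" where
  "admissible_family mU U W d F \<longleftrightarrow>
     \<Union>F = rng U \<and>
     (\<forall>S\<in>F. delta_connected_set mU U W d S \<and> (\<exists>w\<in>rng W. cond_range U W w \<subseteq> S)) \<and>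
     (\<forall>S1\<in>F. \<forall>S2\<in>F. S1 \<noteq> S2 \<longrightarrow> mU (S1 \<inter> S2) \<le> d * mU (rng U)) \<and>
     (\<forall>w\<in>rng W. \<exists>S\<in>F. cond_range U W w \<subseteq> S)"

text \<open>A delta-overlap family: admissible and of largest cardinality among admissible families
  (cardinality comparison via injections, so no finiteness is assumed).\<close>
definition overlap_family :: "('u set \<Rightarrow> real) \<Rightarrow> ('w \<Rightarrow> 'u) \<Rightarrow> ('w \<Rightarrow> 'v) \<Rightarrow> real
    \<Rightarrow> 'u set set \<Rightarrow> bool" where
  "overlap_family mU U W d F \<longleftrightarrow>
     admissible_family mU U W d F \<and>
     (\<forall>F'. admissible_family mU U W d F' \<longrightarrow> (\<exists>f. inj_on f F' \<and> f ` F' \<subseteq> F))"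

end

theory Submission imports Defs begin

lemma chain_to_rtrancl:
  "ws \<noteq> [] \<Longrightarrow> set ws \<subseteq> A \<Longrightarrow> (\<forall>i. 0<i \<and> i<length ws \<longrightarrow> Rel (ws!(i-1)) (ws!i))
   \<Longrightarrow> (hd ws, last ws) \<in> {(x,y). x\<in>A \<and> y\<in>A \<and> Rel x y}\<^sup>*"
proof (induction ws)
  case Nil then show ?case by simp
next
  case (Cons a ws)
  show ?case
  proof (cases "ws = []")
    case True then show ?thesis by simp
  next
    case False
    have h: "\<forall>i. 0<i \<and> i<length ws \<longrightarrow> Rel (ws!(i-1)) (ws!i)"
    proof (intro allI impI)
      fix i assume "0<i \<and> i<length ws"
      with Cons.prems(3)[rule_format, of "Suc i"] show "Rel (ws!(i-1)) (ws!i)"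
        by (cases i) auto
    qed
    have "(hd ws, last ws) \<in> {(x,y). x\<in>A \<and> y\<in>A \<and> Rel x y}\<^sup>*"
      using Cons.IH False Cons.prems h by auto
    moreover have "Rel a (hd ws)" using Cons.prems(3)[rule_format, of 1] False
      by (cases ws) auto
    moreover have "a \<in> A" "hd ws \<in> A" using Cons.prems False by (auto simp: hd_in_set subset_iff)
    ultimately show ?thesis using False
      by (auto intro: converse_rtrancl_into_rtrancl)
  qed
qed

lemma rtrancl_to_chain:
  assumes "(a,b) \<in> {(x,y). x\<in>A \<and> y\<in>A \<and> Rel x y}\<^sup>*" "a \<in> A"
  shows "\<exists>ws. ws \<noteq> [] \<and> set ws \<subseteq> A \<and> hd ws = a \<and> last ws = b \<and>
           (\<forall>i. 0<i \<and> i<length ws \<longrightarrow> Rel (ws!(i-1)) (ws!i))"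
  using assms(1)
proof (induction rule: rtrancl_induct)
  case base
  then show ?case using assms(2) by (intro exI[of _ "[a]"]) auto
next
  case (step b c)
  then obtain ws where ws: "ws \<noteq> []" "set ws \<subseteq> A" "hd ws = a" "last ws = b"
     "\<forall>i. 0<i \<and> i<length ws \<longrightarrow> Rel (ws!(i-1)) (ws!i)" by blast
  have "\<forall>i. 0<i \<and> i<length (ws@[c]) \<longrightarrow> Rel ((ws@[c])!(i-1)) ((ws@[c])!i)"
  proof (intro allI impI)
    fix i assume i: "0<i \<and> i<length (ws@[c])"
    show "Rel ((ws@[c])!(i-1)) ((ws@[c])!i)"
    proof (cases "i < length ws")
      case True then show ?thesis using ws(5) i by (auto simp: nth_append)
    next
      case False
      then have "i = length ws" using i by auto
      then show ?thesis using ws step(2) by (auto simp: nth_append last_conv_nth)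
    qed
  qed
  then show ?case using ws step(2) by (intro exI[of _ "ws@[c]"]) auto
qed

lemma prod_gt_pow:
  fixes f :: "nat \<Rightarrow> real"
  shows "1 \<le> n \<Longrightarrow> 0 \<le> d \<Longrightarrow> (\<forall>j<n. d < f j) \<Longrightarrow> d ^ n < (\<Prod>j<n. f j)"
proof (induction n)
  case 0 then show ?case by simp
next
  case (Suc n)
  show ?case
  proof (cases "n = 0")
    case True then show ?thesis using Suc by simp
  next
    case False
    then have "d ^ n < (\<Prod>j<n. f j)" using Suc by auto
    moreover have "d < f n" using Suc by auto
    moreover have "0 < (\<Prod>j<n. f j)"
      using \<open>d ^ n < (\<Prod>j<n. f j)\<close> zero_le_power[OF Suc.prems(2), of n] by linarith
    ultimately have "d ^ n * d < (\<Prod>j<n. f j) * f n"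
      using Suc.prems(2) by (intro mult_strict_mono) auto
    then show ?thesis by (simp add: mult.commute)
  qed
qed

lemma prod_set_Int: "prod_set n A \<inter> prod_set n B = prod_set n (\<lambda>i. A i \<inter> B i)"
  by (auto simp: prod_set_def)

lemma prod_set_mono: "(\<forall>i<n. A i \<subseteq> B i) \<Longrightarrow> prod_set n A \<subseteq> prod_set n B"
  by (auto simp: prod_set_def)

lemma unc_mono: "unc_fun U m \<Longrightarrow> S \<subseteq> T \<Longrightarrow> T \<subseteq> U \<Longrightarrow> m S \<le> m T"
  unfolding unc_fun_def
  by (metis Un_absorb1 max.bounded_iff order_refl subset_trans)

lemma unc_nonneg: "unc_fun U m \<Longrightarrow> S \<subseteq> U \<Longrightarrow> 0 \<le> m S"
  unfolding unc_fun_def by (cases "S = {}") (auto simp: less_imp_le)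

theorem lemma2:
  fixes n :: nat
    and X :: "nat \<Rightarrow> 'w \<Rightarrow> 'x" and Y :: "nat \<Rightarrow> 'w \<Rightarrow> 'y"
    and mX :: "'x list set \<Rightarrow> real" and mY :: "'y list set \<Rightarrow> real"
    and \<delta> :: real
    and F :: "nat \<Rightarrow> 'y set set"
  assumes n_pos: "1 \<le> n"
    and mX_unc: "\<forall>k\<ge>1. unc_fun {xs. length xs = k} mX"
    and mY_unc: "\<forall>k\<ge>1. unc_fun {ys. length ys = k} mY"
    and mY_norm: "\<forall>k\<ge>1. mY {ys. length ys = k} = 1"
    and prod_unc: "\<forall>k\<ge>1. \<forall>S :: nat \<Rightarrow> 'y set. mY (prod_set k S) = (\<Prod>i<k. m1 mY (S i))"
    and X_prod: "rng (tuple_uv n X) = prod_set n (\<lambda>i. rng (X i))"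
    and Y_cond_prod: "\<forall>xs\<in>rng (tuple_uv n X).
          cond_range (tuple_uv n Y) (tuple_uv n X) xs
            = prod_set n (\<lambda>i. cond_range (Y i) (X i) (xs ! i))"
    and delta_nonneg: "0 \<le> \<delta>"
    and delta_less: "\<forall>i<n. \<forall>x\<in>rng (X i). \<delta> < m1 mY (cond_range (Y i) (X i) x)"
    and rel: "disassoc mX mY (tuple_uv n X) (tuple_uv n Y) 0 (\<delta> ^ n)
              \<or> assoc_rel mX mY (tuple_uv n X) (tuple_uv n Y) 1 (\<delta> ^ n)"
    and F_overlap: "\<forall>i<n. overlap_family (m1 mY) (Y i) (X i) \<delta> (F i)"
  shows
    "(let P = {prod_set n S | S. \<forall>i<n. S i \<in> F i};
          Xn = tuple_uv n X; Yn = tuple_uv n Y;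
          dhat = Sup {m1 mY S / m1 mY (rng (Y i)) | i S. i < n \<and> S \<in> F i}
      in \<Union>P = rng Yn
       \<and> (\<forall>S\<in>P. delta_connected_set mY Yn Xn (\<delta> ^ n) S
                 \<and> (\<exists>xs\<in>rng Xn. cond_range Yn Xn xs \<subseteq> S))
       \<and> (\<forall>xs\<in>rng Xn. \<exists>S\<in>P. cond_range Yn Xn xs \<subseteq> S)
       \<and> (\<forall>S1\<in>P. \<forall>S2\<in>P. S1 \<noteq> S2 \<longrightarrow>
            mY (S1 \<inter> S2) / mY (rng Yn) \<le> \<delta> * dhat ^ (n - 1)))"
proof -
  let ?Xn = "tuple_uv n X" and ?Yn = "tuple_uv n Y"
  let ?P = "{prod_set n S | S. \<forall>i<n. S i \<in> F i}"
  let ?dh = "Sup {m1 mY S / m1 mY (rng (Y i)) | i S. i < n \<and> S \<in> F i}"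
  have U1: "unc_fun {ys. length ys = 1} mY" using mY_unc by auto
  have sing: "(\<lambda>y. [y]) ` S \<subseteq> {ys. length ys = 1}" for S :: "'y set" by auto
  have m1_nonneg: "0 \<le> m1 mY S" for S
    unfolding m1_def by (rule unc_nonneg[OF U1 sing])
  have m1_mono: "S \<subseteq> T \<Longrightarrow> m1 mY S \<le> m1 mY T" for S T
    unfolding m1_def by (rule unc_mono[OF U1 image_mono sing])
  have m1_le1: "m1 mY S \<le> 1" for S
    using unc_mono[OF U1 sing order_refl] mY_norm unfolding m1_def by auto
  have R_pos: "0 < m1 mY (rng (Y i))" for i
    using U1 sing[of "rng (Y i)"] unfolding unc_fun_def m1_def rng_def by auto
  have prodY: "mY (prod_set n A) = (\<Prod>i<n. m1 mY (A i))" for A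
    using prod_unc n_pos by auto
  have Xn_mem: "xs \<in> rng ?Xn \<longleftrightarrow> length xs = n \<and> (\<forall>i<n. xs!i \<in> rng (X i))" for xs
    using X_prod by (auto simp: prod_set_def)
  have C_sub_R: "cond_range (Y i) (X i) x \<subseteq> rng (Y i)" for i x
    by (auto simp: cond_range_def rng_def)
  have Cn_sub: "cond_range ?Yn ?Xn xs \<subseteq> rng ?Yn" for xs
    by (auto simp: cond_range_def rng_def)
  have adm: "admissible_family (m1 mY) (Y i) (X i) \<delta> (F i)" if "i < n" for i
    using F_overlap that unfolding overlap_family_def by simp
  have cov: "\<Union>(F i) = rng (Y i)" if "i < n" for i
    using adm[OF that] unfolding admissible_family_def by (elim conjE)
  have conn: "\<forall>S\<in>F i. delta_connected_set (m1 mY) (Y i) (X i) \<delta> S \<and> (\<exists>w\<in>rng (X i). cond_range (Y i) (X i) w \<subseteq> S)" if "i < n" for i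
    using adm[OF that] unfolding admissible_family_def by (elim conjE)
  have ovl: "\<forall>S1\<in>F i. \<forall>S2\<in>F i. S1 \<noteq> S2 \<longrightarrow> m1 mY (S1 \<inter> S2) \<le> \<delta> * m1 mY (rng (Y i))" if "i < n" for i
    using adm[OF that] unfolding admissible_family_def by (elim conjE)
  have incl: "\<forall>w\<in>rng (X i). \<exists>S\<in>F i. cond_range (Y i) (X i) w \<subseteq> S" if "i < n" for i
    using adm[OF that] unfolding admissible_family_def by (elim conjE)
  have Yn_rng: "rng ?Yn = prod_set n (\<lambda>i. rng (Y i))"
  proof
    show "rng ?Yn \<subseteq> prod_set n (\<lambda>i. rng (Y i))"
      by (auto simp: rng_def tuple_uv_def prod_set_def)
  next
    show "prod_set n (\<lambda>i. rng (Y i)) \<subseteq> rng ?Yn"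
    proof
      fix ys assume ys: "ys \<in> prod_set n (\<lambda>i. rng (Y i))"
      have "\<forall>i<n. \<exists>x. x \<in> rng (X i) \<and> ys!i \<in> cond_range (Y i) (X i) x"
      proof (intro allI impI)
        fix i assume "i < n"
        then obtain \<omega> where "ys!i = Y i \<omega>" using ys by (auto simp: prod_set_def rng_def)
        then show "\<exists>x. x \<in> rng (X i) \<and> ys!i \<in> cond_range (Y i) (X i) x"
          by (intro exI[of _ "X i \<omega>"]) (auto simp: rng_def cond_range_def)
      qed
      then obtain x where x: "\<forall>i<n. x i \<in> rng (X i) \<and> ys!i \<in> cond_range (Y i) (X i) (x i)"
        by metis
      let ?xs = "map x [0..<n]"
      have xs: "?xs \<in> rng ?Xn" using x Xn_mem by auto
      have "ys \<in> cond_range ?Yn ?Xn ?xs"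
        using Y_cond_prod xs x ys by (auto simp: prod_set_def)
      then show "ys \<in> rng ?Yn" using Cn_sub by blast
    qed
  qed
  have mYn_pos: "0 < mY (rng ?Yn)"
    unfolding Yn_rng prodY using R_pos by (simp add: prod_pos)
  have part1: "\<Union>?P = rng ?Yn"
  proof
    show "\<Union>?P \<subseteq> rng ?Yn"
    proof
      fix ys assume "ys \<in> \<Union>?P"
      then obtain S where S: "\<forall>i<n. S i \<in> F i" "ys \<in> prod_set n S" by blast
      have "\<forall>i<n. S i \<subseteq> rng (Y i)"
      proof (intro allI impI)
        fix i assume i: "i < n"
        then have "\<Union>(F i) = rng (Y i)" by (rule cov)
        then show "S i \<subseteq> rng (Y i)" using S(1) i by blast
      qed
      then have "prod_set n S \<subseteq> prod_set n (\<lambda>i. rng (Y i))" by (rule prod_set_mono)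
      then show "ys \<in> rng ?Yn" using S(2) Yn_rng by auto
    qed
  next
    show "rng ?Yn \<subseteq> \<Union>?P"
    proof
      fix ys assume "ys \<in> rng ?Yn"
      then have ys: "ys \<in> prod_set n (\<lambda>i. rng (Y i))" using Yn_rng by simp
      have "\<forall>i<n. \<exists>T. T \<in> F i \<and> ys!i \<in> T"
      proof (intro allI impI)
        fix i assume i: "i < n"
        then have "\<Union>(F i) = rng (Y i)" by (rule cov)
        then show "\<exists>T. T \<in> F i \<and> ys!i \<in> T" using ys i by (auto simp: prod_set_def)
      qed
      then obtain T where T: "\<forall>i<n. T i \<in> F i \<and> ys!i \<in> T i" by metis
      then have "prod_set n T \<in> ?P" by auto
      moreover have "ys \<in> prod_set n T" using T ys by (auto simp: prod_set_def)
      ultimately show "ys \<in> \<Union>?P" by blast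
    qed
  qed
  have part3: "\<forall>xs\<in>rng ?Xn. \<exists>S\<in>?P. cond_range ?Yn ?Xn xs \<subseteq> S"
  proof
    fix xs assume xs: "xs \<in> rng ?Xn"
    have "\<forall>i<n. \<exists>T. T \<in> F i \<and> cond_range (Y i) (X i) (xs!i) \<subseteq> T"
      using incl xs Xn_mem by blast
    then obtain T where T: "\<forall>i<n. T i \<in> F i \<and> cond_range (Y i) (X i) (xs!i) \<subseteq> T i" by metis
    then have "prod_set n T \<in> ?P" by blast
    moreover have "cond_range ?Yn ?Xn xs \<subseteq> prod_set n T"
      using Y_cond_prod xs T prod_set_mono[of n "\<lambda>i. cond_range (Y i) (X i) (xs!i)" T] by auto
    ultimately show "\<exists>S\<in>?P. cond_range ?Yn ?Xn xs \<subseteq> S" by blast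
  qed
  have part2b: "\<forall>S\<in>?P. \<exists>xs\<in>rng ?Xn. cond_range ?Yn ?Xn xs \<subseteq> S"
  proof
    fix S assume "S \<in> ?P"
    then obtain A where A: "\<forall>i<n. A i \<in> F i" "S = prod_set n A" by blast
    have "\<forall>i<n. \<exists>x. x \<in> rng (X i) \<and> cond_range (Y i) (X i) x \<subseteq> A i"
      using conn A(1) by blast
    then obtain x where x: "\<forall>i<n. x i \<in> rng (X i) \<and> cond_range (Y i) (X i) (x i) \<subseteq> A i"
      by metis
    let ?xs = "map x [0..<n]"
    have xs: "?xs \<in> rng ?Xn" using x Xn_mem by auto
    have "cond_range ?Yn ?Xn ?xs \<subseteq> S"
      using Y_cond_prod xs x A(2) prod_set_mono[of n "\<lambda>i. cond_range (Y i) (X i) (?xs!i)" A]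
      by auto
    then show "\<exists>xs\<in>rng ?Xn. cond_range ?Yn ?Xn xs \<subseteq> S" using xs by blast
  qed
  have part4: "\<forall>S1\<in>?P. \<forall>S2\<in>?P. S1 \<noteq> S2 \<longrightarrow> mY (S1 \<inter> S2) / mY (rng ?Yn) \<le> \<delta> * ?dh ^ (n - 1)"
  proof (intro ballI impI)
    fix S1 S2 assume S1: "S1 \<in> ?P" and S2: "S2 \<in> ?P" and ne: "S1 \<noteq> S2"
    obtain A where A: "\<forall>i<n. A i \<in> F i" "S1 = prod_set n A" using S1 by blast
    obtain B where B: "\<forall>i<n. B i \<in> F i" "S2 = prod_set n B" using S2 by blast
    have "\<exists>i<n. A i \<noteq> B i"
    proof (rule ccontr)
      assume "\<not> (\<exists>i<n. A i \<noteq> B i)"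
      then have "prod_set n A = prod_set n B" by (auto simp: prod_set_def)
      with A B ne show False by simp
    qed
    then obtain i where i: "i < n" "A i \<noteq> B i" by blast
    have bdd: "bdd_above {m1 mY S / m1 mY (rng (Y i)) | i S. i < n \<and> S \<in> F i}"
      unfolding bdd_above_def
    proof (intro exI[of _ 1] ballI)
      fix r assume "r \<in> {m1 mY S / m1 mY (rng (Y i)) | i S. i < n \<and> S \<in> F i}"
      then obtain j S where jS: "r = m1 mY S / m1 mY (rng (Y j))" "j < n" "S \<in> F j" by blast
      have "S \<subseteq> rng (Y j)" using cov[OF jS(2)] jS(3) by blast
      then have "m1 mY S \<le> m1 mY (rng (Y j))" by (rule m1_mono)
      then show "r \<le> 1" using jS(1) R_pos[of j] by simp
    qed
    have fj: "m1 mY (A j \<inter> B j) / m1 mY (rng (Y j)) \<le> ?dh" if j: "j < n" for j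
    proof -
      have "m1 mY (A j \<inter> B j) / m1 mY (rng (Y j)) \<le> m1 mY (A j) / m1 mY (rng (Y j))"
        using m1_mono[of "A j \<inter> B j" "A j"] R_pos[of j] by (simp add: divide_right_mono)
      also have "\<dots> \<le> ?dh"
        by (rule cSup_upper[OF _ bdd]) (use j A(1) in blast)
      finally show ?thesis .
    qed
    have fi: "m1 mY (A i \<inter> B i) / m1 mY (rng (Y i)) \<le> \<delta>"
      using ovl[OF i(1)] A(1) B(1) i R_pos[of i] by (simp add: pos_divide_le_eq)
    have "S1 \<inter> S2 = prod_set n (\<lambda>j. A j \<inter> B j)" using A B prod_set_Int by simp
    then have "mY (S1 \<inter> S2) / mY (rng ?Yn) = (\<Prod>j<n. m1 mY (A j \<inter> B j) / m1 mY (rng (Y j)))"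
      using Yn_rng prodY by (simp add: prod_dividef)
    also have "\<dots> \<le> (\<Prod>j<n. if j = i then \<delta> else ?dh)"
      by (rule prod_mono) (use fi fj m1_nonneg R_pos in \<open>auto intro: divide_nonneg_pos\<close>)
    also have "\<dots> = \<delta> * ?dh ^ (n - 1)"
    proof -
      have "(\<Prod>j<n. if j = i then \<delta> else ?dh) = \<delta> * (\<Prod>j\<in>{..<n} - {i}. if j = i then \<delta> else ?dh)"
        using i(1) by (subst prod.remove[of _ i]) auto
      also have "(\<Prod>j\<in>{..<n} - {i}. if j = i then \<delta> else ?dh) = (\<Prod>j\<in>{..<n} - {i}. ?dh)"
        by (rule prod.cong) auto
      also have "\<dots> = ?dh ^ (n - 1)" using i(1) by (simp add: prod_constant)
      finally show ?thesis .
    qed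
    finally show "mY (S1 \<inter> S2) / mY (rng ?Yn) \<le> \<delta> * ?dh ^ (n - 1)" .
  qed
  define E where "E i = {(x,y). x \<in> rng (X i) \<and> y \<in> rng (X i) \<and>
      \<delta> < m1 mY (cond_range (Y i) (X i) y \<inter> cond_range (Y i) (X i) x) / m1 mY (rng (Y i))}" for i
  define ER where "ER = {(x,y). x \<in> rng ?Xn \<and> y \<in> rng ?Xn \<and>
      \<delta> ^ n < mY (cond_range ?Yn ?Xn y \<inter> cond_range ?Yn ?Xn x) / mY (rng ?Yn)}"
  have adj: "(zs, zs[i := c]) \<in> ER"
    if zs: "zs \<in> rng ?Xn" and i: "i < n" and c: "c \<in> rng (X i)"
      and r: "\<delta> < m1 mY (cond_range (Y i) (X i) c \<inter> cond_range (Y i) (X i) (zs!i)) / m1 mY (rng (Y i))"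
    for zs i c
  proof -
    let ?zs = "zs[i := c]"
    have len: "length zs = n" using zs Xn_mem by auto
    have zs': "?zs \<in> rng ?Xn" using zs c i Xn_mem by (auto simp: nth_list_update)
    have "cond_range ?Yn ?Xn ?zs \<inter> cond_range ?Yn ?Xn zs
        = prod_set n (\<lambda>j. cond_range (Y j) (X j) (?zs!j) \<inter> cond_range (Y j) (X j) (zs!j))"
      using Y_cond_prod zs zs' prod_set_Int by simp
    then have eq: "mY (cond_range ?Yn ?Xn ?zs \<inter> cond_range ?Yn ?Xn zs) / mY (rng ?Yn)
        = (\<Prod>j<n. m1 mY (cond_range (Y j) (X j) (?zs!j) \<inter> cond_range (Y j) (X j) (zs!j)) / m1 mY (rng (Y j)))"
      using Yn_rng prodY by (simp add: prod_dividef)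
    have "\<forall>j<n. \<delta> < m1 mY (cond_range (Y j) (X j) (?zs!j) \<inter> cond_range (Y j) (X j) (zs!j)) / m1 mY (rng (Y j))"
    proof (intro allI impI)
      fix j assume j: "j < n"
      show "\<delta> < m1 mY (cond_range (Y j) (X j) (?zs!j) \<inter> cond_range (Y j) (X j) (zs!j)) / m1 mY (rng (Y j))"
      proof (cases "j = i")
        case True then show ?thesis using r len i by simp
      next
        case False
        then have zj: "?zs!j = zs!j" by simp
        have xj: "zs!j \<in> rng (X j)" using zs Xn_mem j by auto
        let ?a = "m1 mY (cond_range (Y j) (X j) (zs!j))"
        let ?b = "m1 mY (rng (Y j))"
        have a: "\<delta> < ?a" using delta_less j xj by auto
        have "?a \<le> ?a / ?b" using R_pos[of j] m1_le1[of "rng (Y j)"] m1_nonneg[of "cond_range (Y j) (X j) (zs!j)"]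
          by (simp add: le_divide_eq mult_left_le)
        then show ?thesis using a zj by simp
      qed
    qed
    then have "\<delta> ^ n < mY (cond_range ?Yn ?Xn ?zs \<inter> cond_range ?Yn ?Xn zs) / mY (rng ?Yn)"
      unfolding eq using n_pos delta_nonneg by (intro prod_gt_pow) auto
    then show ?thesis unfolding ER_def using zs zs' by simp
  qed
  have lift: "(a, b) \<in> (E i)\<^sup>* \<Longrightarrow> \<forall>zs. zs \<in> rng ?Xn \<and> zs!i = a \<and> i < n \<longrightarrow> (zs, zs[i := b]) \<in> ER\<^sup>*"
    for a b i
  proof (induction rule: rtrancl_induct)
    case base then show ?case by (metis list_update_id rtrancl.rtrancl_refl)
  next
    case (step y z)
    show ?case
    proof (intro allI impI)
      fix zs assume zs: "zs \<in> rng ?Xn \<and> zs!i = a \<and> i < n"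
      have 1: "(zs, zs[i := y]) \<in> ER\<^sup>*" using step.IH zs by blast
      have yz: "y \<in> rng (X i)" "z \<in> rng (X i)"
        "\<delta> < m1 mY (cond_range (Y i) (X i) z \<inter> cond_range (Y i) (X i) y) / m1 mY (rng (Y i))"
        using step.hyps(2) unfolding E_def by auto
      have len: "length zs = n" using zs Xn_mem by auto
      have zy: "zs[i := y] \<in> rng ?Xn" using zs yz Xn_mem by (auto simp: nth_list_update)
      have "(zs[i := y], (zs[i := y])[i := z]) \<in> ER"
        using adj[OF zy _ yz(2)] zs len yz(3) by simp
      then have "(zs[i := y], zs[i := z]) \<in> ER" by simp
      with 1 show "(zs, zs[i := z]) \<in> ER\<^sup>*" by (rule rtrancl_into_rtrancl)
    qed
  qed
  have full: "(xs, xs') \<in> ER\<^sup>*"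
    if xs: "xs \<in> rng ?Xn" and xs': "xs' \<in> rng ?Xn" and h: "\<forall>i<n. (xs!i, xs'!i) \<in> (E i)\<^sup>*" for xs xs'
  proof -
    have lxs: "length xs = n" "length xs' = n" using xs xs' Xn_mem by auto
    have "k \<le> n \<Longrightarrow> (xs, map (\<lambda>j. if j < k then xs'!j else xs!j) [0..<n]) \<in> ER\<^sup>*" for k
    proof (induction k)
      case 0
      have "map (\<lambda>j. if j < 0 then xs'!j else xs!j) [0..<n] = xs"
        using lxs by (intro nth_equalityI) auto
      then show ?case by simp
    next
      case (Suc k)
      let ?ys = "map (\<lambda>j. if j < k then xs'!j else xs!j) [0..<n]"
      have 1: "(xs, ?ys) \<in> ER\<^sup>*" using Suc by simp
      have ys: "?ys \<in> rng ?Xn" using xs xs' Xn_mem by auto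
      have "?ys ! k = xs ! k" using Suc.prems by simp
      then have "(?ys, ?ys[k := xs'!k]) \<in> ER\<^sup>*"
        using lift[OF h[rule_format, of k]] ys Suc.prems by auto
      moreover have "?ys[k := xs'!k] = map (\<lambda>j. if j < Suc k then xs'!j else xs!j) [0..<n]"
        by (intro nth_equalityI) (auto simp: nth_list_update less_Suc_eq)
      ultimately show ?case using 1 by simp
    qed
    from this[of n] have "(xs, map (\<lambda>j. if j < n then xs'!j else xs!j) [0..<n]) \<in> ER\<^sup>*" by simp
    moreover have "map (\<lambda>j. if j < n then xs'!j else xs!j) [0..<n] = xs'"
      using lxs by (intro nth_equalityI) auto
    ultimately show ?thesis by simp
  qed
  have part2a: "\<forall>S\<in>?P. delta_connected_set mY ?Yn ?Xn (\<delta> ^ n) S"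
  proof
    fix S assume "S \<in> ?P"
    then obtain A where A: "\<forall>i<n. A i \<in> F i" "S = prod_set n A" by blast
    show "delta_connected_set mY ?Yn ?Xn (\<delta> ^ n) S"
      unfolding delta_connected_set_def
    proof (intro ballI)
      fix u u' assume u: "u \<in> S" and u': "u' \<in> S"
      have "\<forall>i<n. \<exists>a b. a \<in> rng (X i) \<and> b \<in> rng (X i) \<and> u!i \<in> cond_range (Y i) (X i) a
               \<and> u'!i \<in> cond_range (Y i) (X i) b \<and> (a, b) \<in> (E i)\<^sup>*"
      proof (intro allI impI)
        fix i assume i: "i < n"
        have "u!i \<in> A i" "u'!i \<in> A i" using u u' A(2) i by (auto simp: prod_set_def)
        moreover have "delta_connected_set (m1 mY) (Y i) (X i) \<delta> (A i)" using conn[OF i] A(1) i by blast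
        ultimately have "delta_connected (m1 mY) (Y i) (X i) \<delta> (u!i) (u'!i)"
          unfolding delta_connected_set_def by blast
        then obtain ws where ws: "ws \<noteq> []" "set ws \<subseteq> rng (X i)"
          "u!i \<in> cond_range (Y i) (X i) (hd ws)" "u'!i \<in> cond_range (Y i) (X i) (last ws)"
          "\<forall>k. 0 < k \<and> k < length ws \<longrightarrow>
             \<delta> < m1 mY (cond_range (Y i) (X i) (ws ! k) \<inter> cond_range (Y i) (X i) (ws ! (k - 1))) / m1 mY (rng (Y i))"
          unfolding delta_connected_def by blast
        have "(hd ws, last ws) \<in> (E i)\<^sup>*"
          unfolding E_def by (rule chain_to_rtrancl[OF ws(1,2)]) (use ws(5) in simp)
        moreover have "hd ws \<in> rng (X i)" "last ws \<in> rng (X i)" using ws(1,2) by auto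
        ultimately show "\<exists>a b. a \<in> rng (X i) \<and> b \<in> rng (X i) \<and> u!i \<in> cond_range (Y i) (X i) a
               \<and> u'!i \<in> cond_range (Y i) (X i) b \<and> (a, b) \<in> (E i)\<^sup>*" using ws(3,4) by blast
      qed
      then obtain a b where ab: "\<forall>i<n. a i \<in> rng (X i) \<and> b i \<in> rng (X i) \<and> u!i \<in> cond_range (Y i) (X i) (a i)
               \<and> u'!i \<in> cond_range (Y i) (X i) (b i) \<and> (a i, b i) \<in> (E i)\<^sup>*" by metis
      let ?xs = "map a [0..<n]" and ?xs' = "map b [0..<n]"
      have xs: "?xs \<in> rng ?Xn" and xs': "?xs' \<in> rng ?Xn" using ab Xn_mem by auto
      have "(?xs, ?xs') \<in> ER\<^sup>*" using full[OF xs xs'] ab by simp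
      then have "\<exists>ws. ws \<noteq> [] \<and> set ws \<subseteq> rng ?Xn \<and> hd ws = ?xs \<and> last ws = ?xs' \<and>
           (\<forall>i. 0<i \<and> i<length ws \<longrightarrow> \<delta> ^ n < mY (cond_range ?Yn ?Xn (ws!i) \<inter> cond_range ?Yn ?Xn (ws!(i-1))) / mY (rng ?Yn))"
        unfolding ER_def by (rule rtrancl_to_chain[OF _ xs])
      then obtain ws where ws: "ws \<noteq> []" "set ws \<subseteq> rng ?Xn" "hd ws = ?xs" "last ws = ?xs'"
           "\<forall>i. 0<i \<and> i<length ws \<longrightarrow> \<delta> ^ n < mY (cond_range ?Yn ?Xn (ws!i) \<inter> cond_range ?Yn ?Xn (ws!(i-1))) / mY (rng ?Yn)"
        by blast
      have lu: "length u = n" "length u' = n" using u u' A(2) by (auto simp: prod_set_def)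
      have "u \<in> cond_range ?Yn ?Xn ?xs" using Y_cond_prod xs ab lu by (auto simp: prod_set_def)
      moreover have "u' \<in> cond_range ?Yn ?Xn ?xs'" using Y_cond_prod xs' ab lu by (auto simp: prod_set_def)
      ultimately show "delta_connected mY ?Yn ?Xn (\<delta> ^ n) u u'"
        unfolding delta_connected_def using ws by (intro exI[of _ ws]) auto
    qed
  qed
  show ?thesis unfolding Let_def using part1 part2a part2b part3 part4 by blast
qed

end
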